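(* Let $0\le r\le n$. For each $0\le j\le r$, the operator $K_{rj}$ has order $r$, degree $-j$ and deficiency $r$ relative to $\mathcal P_n$. Conversely, if $L$ is a linear differential operator with polynomial coefficients of order $r$ and deficiency $r$ relative to $\mathcal P_n$ which has a degree $d$, then $d=-j$ for some $0\le j\le r$ and $L=a\,K_{rj}$ for some nonzero real constant $a$.
   Context: $D=d/dx$. For $s\ge0$, $\mathcal P_s$ is the space of real polynomials in $x$ of degree at most $s$, and $\mathcal P_s=\{0\}$ for $s<0$. A linear differential operator with polynomial coefficients is $L=\sum_{i=0}^r a_i(x)D^i$ with $a_i\in\mathbb R[x]$; its order is the largest $i$ with $a_i\ne0$. $L$ has degree $d\in\mathbb Z$ if there are real numbers $c_j$, not all zero, with $L[x^j]=c_jx^{j+d}$ for all $j\in\mathbb N$. $L$ has deficiency $m$ relative to $\mathcal P_n$ if $L(\mathcal P_n)\subset\mathcal P_{n-m}$ but $L(\mathcal P_n)\not\subset\mathcal P_{n-m-1}$. Pochhammer operator: $(a-xD)_k=(-1)^k(xD-a)(xD-(a-1))\cdots(xD-(a-k+1))$. For $0\le j\le r\le n$, $K_{rj}=\frac{1}{(r-j)!}(n-j-xD)_{r-j}D^j$. *)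

theory Defs
  imports "HOL-Computational_Algebra.Polynomial"
begin

definition diff_op :: "(nat \<Rightarrow> real poly) \<Rightarrow> nat \<Rightarrow> real poly \<Rightarrow> real poly" where
  "diff_op a r p = (\<Sum>i\<le>r. a i * (pderiv ^^ i) p)"

definition has_order :: "(real poly \<Rightarrow> real poly) \<Rightarrow> nat \<Rightarrow> bool" where
  "has_order L r \<longleftrightarrow> (\<exists>a. a r \<noteq> 0 \<and> L = diff_op a r)"

text \<open>L has degree d: L[x^j] = c_j x^(j+d) for all j, c not identically zero
  (c_j must vanish when j + d < 0, since then x^(j+d) is not a polynomial).\<close>
definition has_degree :: "(real poly \<Rightarrow> real poly) \<Rightarrow> int \<Rightarrow> bool" where
  "has_degree L d \<longleftrightarrow> (\<exists>c :: nat \<Rightarrow> real. (\<exists>j. c j \<noteq> 0) \<and>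
      (\<forall>j. (c j \<noteq> 0 \<longrightarrow> int j + d \<ge> 0) \<and>
           L (monom 1 j) = monom (c j) (nat (int j + d))))"

definition Pspace :: "int \<Rightarrow> real poly set" where
  "Pspace s = (if s < 0 then {0} else {p. int (degree p) \<le> s})"

definition deficiency :: "(real poly \<Rightarrow> real poly) \<Rightarrow> nat \<Rightarrow> int \<Rightarrow> bool" where
  "deficiency L n m \<longleftrightarrow> L ` Pspace (int n) \<subseteq> Pspace (int n - m) \<and>
      \<not> (L ` Pspace (int n) \<subseteq> Pspace (int n - m - 1))"

definition xD_minus :: "real \<Rightarrow> real poly \<Rightarrow> real poly" where
  "xD_minus c p = pCons 0 (pderiv p) - smult c p"

text \<open>Pochhammer operator (a - xD)_k = (-1)^k (xD - a)(xD - (a-1))...(xD - (a-k+1)).\<close>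
fun poch_op :: "real \<Rightarrow> nat \<Rightarrow> real poly \<Rightarrow> real poly" where
  "poch_op a 0 p = p"
| "poch_op a (Suc k) p = smult (-1) (xD_minus (a - real k) (poch_op a k p))"

definition K_op :: "nat \<Rightarrow> nat \<Rightarrow> nat \<Rightarrow> real poly \<Rightarrow> real poly" where
  "K_op n r j p = smult (1 / fact (r - j)) (poch_op (real n - real j) (r - j) ((pderiv ^^ j) p))"

end

theory Submission
  imports Defs
begin


definition ff :: "real \<Rightarrow> nat \<Rightarrow> real" where "ff x i = (\<Prod>k<i. x - real k)"
definition ffpoly :: "nat \<Rightarrow> real poly" where "ffpoly i = (\<Prod>k<i. [:- real k, 1:])"

lemma ff_0[simp]: "ff x 0 = 1" by (simp add: ff_def)
lemma ff_Suc: "ff x (Suc i) = ff x i * (x - real i)" by (simp add: ff_def)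

lemma coeff_pderiv_iter: "coeff ((pderiv^^i) p) t = ff (real (t+i)) i * coeff p (t+i)"
proof (induction i arbitrary: t)
  case 0 then show ?case by simp
next
  case (Suc i)
  have "coeff ((pderiv^^Suc i) p) t = real (Suc t) * coeff ((pderiv^^i) p) (Suc t)"
    by (simp add: coeff_pderiv)
  also have "\<dots> = real (Suc t) * (ff (real (Suc t + i)) i * coeff p (Suc t + i))"
    by (simp only: Suc.IH)
  also have "\<dots> = ff (real (t + Suc i)) (Suc i) * coeff p (t + Suc i)"
  proof -
    have e: "t + Suc i = Suc t + i" by simp
    show ?thesis unfolding e ff_Suc by simp
  qed
  finally show ?case .
qed

lemma coeff_poch: "coeff (poch_op a k p) t = (\<Prod>i<k. a - real i - real t) * coeff p t"
proof (induction k)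
  case 0 then show ?case by simp
next
  case (Suc k)
  have x: "coeff (xD_minus c q) t = (real t - c) * coeff q t" for c q
    by (cases t) (auto simp: xD_minus_def coeff_pCons coeff_pderiv algebra_simps)
  show ?case using Suc by (simp add: x algebra_simps)
qed

lemma coeff_K: "coeff (K_op n r j p) t =
   (\<Prod>i<r-j. real n - real j - real i - real t) / fact (r-j) * ff (real (t+j)) j * coeff p (t+j)"
  by (simp add: K_op_def coeff_poch coeff_pderiv_iter)

lemma ff_zero: "m < i \<Longrightarrow> ff (real m) i = 0"
  unfolding ff_def by (subst prod_zero_iff) auto

lemma ff_nz: "i \<le> m \<Longrightarrow> ff (real m) i \<noteq> 0"
  unfolding ff_def by (auto simp: prod_zero_iff)

lemma ff_split: "ff x (j + l) = ff x j * ff (x - real j) l"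
  by (induction l) (auto simp: ff_Suc algebra_simps)

lemma poly_ffpoly: "poly (ffpoly i) x = ff x i"
  by (simp add: ffpoly_def ff_def poly_prod)

lemma degree_ffpoly: "degree (ffpoly i) = i"
  unfolding ffpoly_def by (subst degree_prod_sum_eq) auto

lemma lead_ffpoly: "coeff (ffpoly i) i = 1"
  using lead_coeff_prod[of "\<lambda>k. [:- real k, 1:]" "{..<i}"] degree_ffpoly[of i]
  by (simp add: ffpoly_def)

lemma ff_basis: "degree q \<le> s \<Longrightarrow> \<exists>b. (\<forall>x. poly q x = (\<Sum>i\<le>s. b i * ff x i)) \<and> b s = coeff q s"
proof (induction s arbitrary: q)
  case 0
  then obtain c where "q = [:c:]" by (metis degree_eq_zeroE le_zero_eq)
  then show ?case by (intro exI[of _ "\<lambda>_. c"]) simp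
next
  case (Suc s)
  define q' where "q' = q - smult (coeff q (Suc s)) (ffpoly (Suc s))"
  have "degree q' \<le> s"
  proof (rule degree_le, intro allI impI)
    fix i assume "s < i"
    show "coeff q' i = 0"
    proof (cases "i = Suc s")
      case True then show ?thesis by (simp add: q'_def lead_ffpoly)
    next
      case False
      then have "i > Suc s" using \<open>s < i\<close> by simp
      then show ?thesis using Suc.prems degree_ffpoly[of "Suc s"]
        by (simp add: q'_def coeff_eq_0)
    qed
  qed
  then obtain b where b: "\<forall>x. poly q' x = (\<Sum>i\<le>s. b i * ff x i)" using Suc.IH by blast
  show ?case
  proof (intro exI[of _ "b(Suc s := coeff q (Suc s))"] conjI allI)
    fix x
    have "poly q x = poly q' x + coeff q (Suc s) * ff x (Suc s)"
      by (simp add: q'_def poly_ffpoly)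
    also have "\<dots> = (\<Sum>i\<le>Suc s. (b(Suc s := coeff q (Suc s))) i * ff x i)"
      using b by simp
    finally show "poly q x = (\<Sum>i\<le>Suc s. (b(Suc s := coeff q (Suc s))) i * ff x i)" .
  qed simp
qed

lemma coeff_term:
  assumes "a = monom \<beta> (nat (int i + d))" "int i + d < 0 \<longrightarrow> \<beta> = 0"
  shows "coeff (a * (pderiv^^i) p) t = (if d \<le> int t then \<beta> * ff (real (nat (int t - d))) i * coeff p (nat (int t - d)) else 0)"
proof (cases "\<beta> = 0")
  case True then show ?thesis using assms by simp
next
  case False
  then have id: "int i + d \<ge> 0" using assms by auto
  show ?thesis
  proof (cases "d \<le> int t")
    case True
    show ?thesis
    proof (cases "t < nat (int i + d)")
      case True
      then have "nat (int t - d) < i" using id \<open>d \<le> int t\<close> by linarith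
      then have "ff (real (nat (int t - d))) i = 0" by (rule ff_zero)
      then show ?thesis using True assms(1) \<open>d \<le> int t\<close> by (simp add: coeff_monom_mult)
    next
      case False
      then have "t - nat (int i + d) + i = nat (int t - d)" using id by linarith
      then show ?thesis using False assms(1) \<open>d \<le> int t\<close> by (simp add: coeff_monom_mult coeff_pderiv_iter)
    qed
  next
    case False
    then have "t < nat (int i + d)" by linarith
    then show ?thesis using False assms(1) by (simp add: coeff_monom_mult)
  qed
qed

lemma coeff_G:
  assumes "\<And>i. i \<in> I \<Longrightarrow> a i = monom (\<beta> i) (nat (int i + d)) \<and> (int i + d < 0 \<longrightarrow> \<beta> i = 0)"
  shows "coeff (\<Sum>i\<in>I. a i * (pderiv^^i) p) t =
     (if d \<le> int t then coeff p (nat (int t - d)) * (\<Sum>i\<in>I. \<beta> i * ff (real (nat (int t - d))) i) else 0)"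
proof -
  have "coeff (\<Sum>i\<in>I. a i * (pderiv^^i) p) t = (\<Sum>i\<in>I. coeff (a i * (pderiv^^i) p) t)"
    by (simp add: coeff_sum)
  also have "\<dots> = (\<Sum>i\<in>I. if d \<le> int t then \<beta> i * ff (real (nat (int t - d))) i * coeff p (nat (int t - d)) else 0)"
    by (rule sum.cong[OF refl], rule coeff_term) (use assms in auto)
  finally show ?thesis by (simp add: sum_distrib_left sum_distrib_right mult.commute mult.left_commute)
qed



lemma sum_shift_j:
  fixes g :: "nat \<Rightarrow> real"
  assumes "j \<le> r" "\<And>i. i < j \<Longrightarrow> g i = 0"
  shows "(\<Sum>i\<le>r. g i) = (\<Sum>l\<le>r-j. g (j + l))"
proof -
  have "(\<Sum>i\<le>r. g i) = (\<Sum>i\<in>{j..r}. g i)"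
    by (rule sum.mono_neutral_right) (auto simp: assms)
  also have "\<dots> = (\<Sum>l\<in>{0..r-j}. g (j + l))"
    using sum.atLeastAtMost_shift_0[OF assms(1), of g] by (simp add: comp_def)
  finally show ?thesis by (simp add: atLeast0AtMost)
qed

lemma K_part:
  assumes rn: "r \<le> n" and jr: "j \<le> r"
  shows "has_order (K_op n r j) r \<and> has_degree (K_op n r j) (- int j)
                 \<and> deficiency (K_op n r j) n (int r)"
proof -
  define Qv where "Qv t = (\<Prod>i<r-j. real n - real j - real i - t) / fact (r-j)" for t :: real
  have cK: "coeff (K_op n r j p) t = Qv (real t) * ff (real (t+j)) j * coeff p (t+j)" for p t
    by (simp add: coeff_K Qv_def)
  define Q where "Q = smult (1 / fact (r-j)) (\<Prod>i<r-j. [: real n - real j - real i, -1 :])"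
  have pQ: "poly Q x = Qv x" for x
    by (simp add: Q_def Qv_def poly_prod)
  have dQ: "degree Q = r - j"
    unfolding Q_def degree_smult_eq by (simp add: degree_prod_sum_eq)
  have lQ: "coeff Q (r-j) \<noteq> 0"
  proof -
    have "lead_coeff (\<Prod>i<r-j. [: real n - real j - real i, -1 :]) \<noteq> 0"
      by (subst lead_coeff_prod) auto
    then show ?thesis using dQ unfolding Q_def by (simp add: degree_prod_sum_eq)
  qed
  obtain b where b: "\<And>x. poly Q x = (\<Sum>i\<le>r-j. b i * ff x i)" and br: "b (r-j) = coeff Q (r-j)"
    using ff_basis[of Q "r-j"] dQ by auto
  define a where "a i = (if j \<le> i then monom (b (i-j)) (i-j) else 0)" for i
  define \<beta> where "\<beta> i = (if j \<le> i then b (i-j) else 0)" for i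
  have ha: "a i = monom (\<beta> i) (nat (int i + - int j)) \<and> (int i + - int j < 0 \<longrightarrow> \<beta> i = 0)" for i
    by (auto simp: a_def \<beta>_def nat_diff_distrib)
  have ord: "has_order (K_op n r j) r"
    unfolding has_order_def
  proof (intro exI[of _ a] conjI)
    show "a r \<noteq> 0" using jr lQ br by (simp add: a_def)
    show "K_op n r j = diff_op a r"
    proof (rule ext, rule poly_eqI)
      fix p t
      have "coeff (diff_op a r p) t = coeff p (t+j) * (\<Sum>i\<le>r. \<beta> i * ff (real (t+j)) i)"
        unfolding diff_op_def using coeff_G[of "{..r}" a \<beta> "- int j" p t, OF ha]
        by (simp add: nat_add_distrib)
      also have "(\<Sum>i\<le>r. \<beta> i * ff (real (t+j)) i) = (\<Sum>l\<le>r-j. \<beta> (j+l) * ff (real (t+j)) (j+l))"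
        by (rule sum_shift_j[OF jr]) (simp add: \<beta>_def)
      also have "\<dots> = (\<Sum>l\<le>r-j. ff (real (t+j)) j * (b l * ff (real t) l))"
        by (rule sum.cong) (auto simp: \<beta>_def ff_split)
      also have "\<dots> = ff (real (t+j)) j * Qv (real t)"
        by (simp add: sum_distrib_left[symmetric] b[symmetric] pQ)
      finally show "coeff (K_op n r j p) t = coeff (diff_op a r p) t"
        by (simp add: cK)
    qed
  qed
  define c where "c m = (if j \<le> m then Qv (real (m-j)) * ff (real m) j else 0)" for m
  have Qv0: "Qv (real t) \<noteq> 0" if "t + r \<le> n" for t
    unfolding Qv_def using that by (auto simp: prod_zero_iff)
  have deg: "has_degree (K_op n r j) (- int j)"
    unfolding has_degree_def
  proof (intro exI[of _ c] conjI allI impI)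
    show "\<exists>m. c m \<noteq> 0"
      using Qv0[of 0] rn ff_nz[of j j] by (intro exI[of _ j]) (simp add: c_def)
    fix m
    show "c m \<noteq> 0 \<Longrightarrow> 0 \<le> int m + - int j" by (simp add: c_def split: if_splits)
    show "K_op n r j (monom 1 m) = monom (c m) (nat (int m + - int j))"
    proof (rule poly_eqI)
      fix t
      show "coeff (K_op n r j (monom 1 m)) t = coeff (monom (c m) (nat (int m + - int j))) t"
        by (cases "j \<le> m") (auto simp: cK coeff_monom c_def)
    qed
  qed
  have nr: "\<not> int n - int r < 0" using rn by simp
  have sub: "K_op n r j ` Pspace (int n) \<subseteq> Pspace (int n - int r)"
  proof
    fix q assume "q \<in> K_op n r j ` Pspace (int n)"
    then obtain p where p: "degree p \<le> n" and q: "q = K_op n r j p"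
      by (auto simp: Pspace_def)
    have "degree q \<le> n - r"
    proof (rule degree_le, intro allI impI)
      fix t assume t: "n - r < t"
      show "coeff q t = 0"
      proof (cases "t + j \<le> n")
        case True
        have i1: "n - j - t < r - j" using t True jr rn by linarith
        have i2: "real n - real j - real (n - j - t) - real t = 0" using True by (simp add: of_nat_diff)
        have "(\<Prod>i<r-j. real n - real j - real i - real t) = 0"
          using i1 i2 by (subst prod_zero_iff) (auto intro!: bexI[of _ "n-j-t"])
        then have "Qv (real t) = 0" unfolding Qv_def by simp
        then show ?thesis by (simp add: q cK)
      next
        case False
        then show ?thesis using p by (simp add: q cK coeff_eq_0)
      qed
    qed
    then show "q \<in> Pspace (int n - int r)" using nr rn by (simp add: Pspace_def)
  qed
  have nsub: "\<not> K_op n r j ` Pspace (int n) \<subseteq> Pspace (int n - int r - 1)"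
  proof
    assume H: "K_op n r j ` Pspace (int n) \<subseteq> Pspace (int n - int r - 1)"
    define p where "p = (monom 1 (n - r + j) :: real poly)"
    have "p \<in> Pspace (int n)" using rn jr by (simp add: Pspace_def p_def degree_monom_eq)
    with H have inP: "K_op n r j p \<in> Pspace (int n - int r - 1)" by blast
    have "Qv (real (n - r)) \<noteq> 0" unfolding Qv_def
      using rn jr by (auto simp: prod_zero_iff)
    then have cz: "coeff (K_op n r j p) (n - r) \<noteq> 0"
      using ff_nz[of j "n - r + j"] rn jr by (simp add: cK p_def)
    show False
    proof (cases "int n - int r - 1 < 0")
      case True
      then show False using inP cz by (simp add: Pspace_def)
    next
      case False
      then have "degree (K_op n r j p) < n - r" using inP by (simp add: Pspace_def)
      then show False using cz coeff_eq_0 by blast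
    qed
  qed
  show ?thesis using ord deg sub nsub by (simp add: deficiency_def)
qed



lemma pderiv_iter_monom_big: "m < i \<Longrightarrow> (pderiv^^i) (monom (1::real) m) = 0"
  by (rule poly_eqI) (simp add: coeff_pderiv_iter coeff_monom)

lemma pderiv_iter_monom_same: "(pderiv^^m) (monom (1::real) m) = monom (ff (real m) m) 0"
  by (rule poly_eqI) (auto simp: coeff_pderiv_iter coeff_monom)

lemma coeff_ffpoly_r: "i \<le> r \<Longrightarrow> coeff (ffpoly i) r = (if i = r then 1 else 0)"
  using lead_ffpoly[of r] degree_ffpoly[of i] by (auto simp: coeff_eq_0)

lemma converse:
  fixes a :: "nat \<Rightarrow> real poly" and c :: "nat \<Rightarrow> real" and d :: int
  assumes rn: "r \<le> n" and ar: "a r \<noteq> 0"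
    and sub: "diff_op a r ` Pspace (int n) \<subseteq> Pspace (int n - int r)"
    and hc: "\<And>m. (c m \<noteq> 0 \<longrightarrow> int m + d \<ge> 0) \<and> diff_op a r (monom 1 m) = monom (c m) (nat (int m + d))"
  shows "\<exists>j\<le>r. d = - int j \<and> (\<exists>\<alpha> :: real. \<alpha> \<noteq> 0 \<and> diff_op a r = (\<lambda>p. smult \<alpha> (K_op n r j p)))"
proof -
  define L where "L = diff_op a r"
  define \<beta> where "\<beta> i = coeff (a i) (nat (int i + d))" for i
  have mono: "m \<le> r \<longrightarrow> a m = monom (\<beta> m) (nat (int m + d)) \<and> (int m + d < 0 \<longrightarrow> \<beta> m = 0)" for m
  proof (induction m rule: less_induct)
    case (less m)
    show ?case
    proof
      assume mr: "m \<le> r"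
      have IH: "\<And>i. i \<in> {..<m} \<Longrightarrow> a i = monom (\<beta> i) (nat (int i + d)) \<and> (int i + d < 0 \<longrightarrow> \<beta> i = 0)"
        using less mr by auto
      define S where "S = (\<Sum>i<m. \<beta> i * ff (real m) i)"
      define e where "e = nat (int m + d)"
      have S0: "int m + d < 0 \<Longrightarrow> S = 0"
        unfolding S_def using IH by (intro sum.neutral) auto
      have A: "(\<Sum>i<m. a i * (pderiv^^i) (monom 1 m)) = monom S e"
      proof (rule poly_eqI)
        fix t
        show "coeff (\<Sum>i<m. a i * (pderiv^^i) (monom 1 m)) t = coeff (monom S e) t"
        proof -
          have G: "coeff (\<Sum>i<m. a i * (pderiv^^i) (monom 1 m)) t =
            (if d \<le> int t then coeff (monom 1 m) (nat (int t - d)) * (\<Sum>i<m. \<beta> i * ff (real (nat (int t - d))) i) else 0)"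
            by (rule coeff_G) (rule IH)
          show ?thesis
          proof (cases "d \<le> int t \<and> nat (int t - d) = m")
            case True
            then have "t = e" "\<not> int m + d < 0" by (auto simp: e_def)
            have "coeff (\<Sum>i<m. a i * (pderiv^^i) (monom 1 m)) t = coeff (monom (1::real) m) m * S"
              unfolding G S_def using True by (simp only: if_True)
            then show ?thesis using \<open>t = e\<close> by simp
          next
            case False
            then have "coeff (\<Sum>i<m. a i * (pderiv^^i) (monom 1 m)) t = 0"
              unfolding G by (auto simp: coeff_monom)
            moreover have "coeff (monom S e) t = 0"
            proof (cases "int m + d < 0")
              case True then show ?thesis using S0 by simp
            next
              case False
              then have "t \<noteq> e" using \<open>\<not> (d \<le> int t \<and> nat (int t - d) = m)\<close> by (auto simp: e_def)
              then show ?thesis by (simp add: coeff_monom)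
            qed
            ultimately show ?thesis by simp
          qed
        qed
      qed
      have "L (monom 1 m) = (\<Sum>i\<le>m. a i * (pderiv^^i) (monom 1 m))"
        unfolding L_def diff_op_def
        by (rule sum.mono_neutral_right) (use mr in \<open>auto simp: pderiv_iter_monom_big\<close>)
      also have "\<dots> = monom S e + smult (ff (real m) m) (a m)"
        by (simp add: lessThan_Suc_atMost[symmetric] A pderiv_iter_monom_same monom_0)
      finally have "monom (c m) e = monom S e + smult (ff (real m) m) (a m)"
        using hc[of m] by (simp add: L_def e_def)
      then have "smult (ff (real m) m) (a m) = monom (c m - S) e"
        by (simp add: diff_monom[symmetric] algebra_simps)
      then have "smult (1 / ff (real m) m) (smult (ff (real m) m) (a m)) = smult (1 / ff (real m) m) (monom (c m - S) e)"
        by simp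
      then have "a m = smult (1 / ff (real m) m) (monom (c m - S) e)"
        using ff_nz[of m m] by simp
      then have am: "a m = monom ((c m - S) / ff (real m) m) e" by (simp add: smult_monom)
      then have "\<beta> m = (c m - S) / ff (real m) m" by (simp add: \<beta>_def e_def)
      then show "a m = monom (\<beta> m) (nat (int m + d)) \<and> (int m + d < 0 \<longrightarrow> \<beta> m = 0)"
        using am S0 hc[of m] by (auto simp: e_def)
    qed
  qed
  then have mono': "\<And>i. i \<in> {..r} \<Longrightarrow> a i = monom (\<beta> i) (nat (int i + d)) \<and> (int i + d < 0 \<longrightarrow> \<beta> i = 0)"
    by auto
  define Pp where "Pp = (\<Sum>i\<le>r. smult (\<beta> i) (ffpoly i))"
  have pPp: "poly Pp x = (\<Sum>i\<le>r. \<beta> i * ff x i)" for x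
    by (simp add: Pp_def poly_sum poly_ffpoly)
  have cL: "coeff (L p) t = (if d \<le> int t then coeff p (nat (int t - d)) * poly Pp (real (nat (int t - d))) else 0)" for p t
    using coeff_G[of "{..r}" a \<beta> d p t, OF mono'] unfolding L_def diff_op_def pPp by simp
  have br: "\<beta> r \<noteq> 0" using mono[of r] ar by auto
  have rd: "int r + d \<ge> 0" using mono[of r] br by auto
  have dPp: "degree Pp \<le> r"
    unfolding Pp_def by (rule degree_sum_le) (auto intro: order.trans[OF degree_smult_le] simp: degree_ffpoly)
  have cPp: "coeff Pp r = \<beta> r"
  proof -
    have "coeff Pp r = (\<Sum>i\<le>r. if i = r then \<beta> i else 0)"
      unfolding Pp_def coeff_sum by (rule sum.cong) (auto simp: coeff_ffpoly_r)
    then show ?thesis by simp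
  qed
  have Pp0: "Pp \<noteq> 0" using cPp br by auto
  have dPp': "degree Pp = r" using dPp le_degree[of Pp r] cPp br by simp
  have neg: "poly Pp (real m) = 0" if "int m + d < 0" for m
    unfolding pPp
  proof (rule sum.neutral, intro ballI)
    fix i assume "i \<in> {..r}"
    show "\<beta> i * ff (real m) i = 0"
    proof (cases "m < i")
      case True then show ?thesis by (simp add: ff_zero)
    next
      case False then show ?thesis using mono[of i] \<open>i \<in> {..r}\<close> that by auto
    qed
  qed
  have big: "poly Pp (real m) = 0" if "m \<le> n" "int m + d > int n - int r" for m
  proof -
    have md: "int m + d \<ge> 0" using that rn by linarith
    have "monom 1 m \<in> Pspace (int n)" using that by (simp add: Pspace_def degree_monom_eq)
    then have "L (monom 1 m) \<in> Pspace (int n - int r)" using sub L_def by blast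
    then have "degree (L (monom 1 m)) \<le> n - r" using rn by (simp add: Pspace_def)
    then have "coeff (L (monom 1 m)) (nat (int m + d)) = 0"
    proof (intro coeff_eq_0)
      have "n - r < nat (int m + d)" using that md rn by arith
      then show "degree (L (monom 1 m)) < nat (int m + d)" using \<open>degree (L (monom 1 m)) \<le> n - r\<close> by linarith
    qed
    then show ?thesis using md by (simp add: cL coeff_monom)
  qed
  have dle: "d \<le> 0"
  proof (rule ccontr)
    assume "\<not> d \<le> 0"
    have "Pp = 0"
    proof (rule poly_eqI_degree[of "real ` {n-r..n}"])
      fix x assume "x \<in> real ` {n-r..n}"
      then obtain m where "x = real m" "n - r \<le> m" "m \<le> n" by auto
      then show "poly Pp x = poly 0 x" using big[of m] \<open>\<not> d \<le> 0\<close> rn by simp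
    next
      show "degree Pp < card (real ` {n-r..n})" using dPp' rn by (simp add: card_image)
    qed (simp_all add: card_image)
    then show False using Pp0 by simp
  qed
  define j where "j = nat (- d)"
  have dj: "d = - int j" using dle by (simp add: j_def)
  have jr: "j \<le> r" using rd dj by simp
  define R where "R = ffpoly j * (\<Prod>i<r-j. [: real n - real i, -1 :])"
  have R1: "(\<Prod>i<r-j. [: real n - real i, -1 :]) \<noteq> 0" by (simp add: prod_zero_iff)
  have R2: "ffpoly j \<noteq> 0" using lead_ffpoly[of j] by auto
  have dR: "degree R = r"
    unfolding R_def using R1 R2 jr by (simp add: degree_mult_eq degree_ffpoly degree_prod_sum_eq)
  have lR: "coeff R r \<noteq> 0"
  proof -
    have "lead_coeff R \<noteq> 0" using R1 R2 unfolding R_def by simp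
    then show ?thesis using dR by simp
  qed
  define \<alpha> where "\<alpha> = coeff Pp r / coeff R r"
  have "Pp = smult \<alpha> R"
  proof (rule poly_eqI_degree_lead_coeff[where n=r and A="real ` ({..<j} \<union> {n-r+j<..n})"])
    show "coeff Pp r = coeff (smult \<alpha> R) r" using lR by (simp add: \<alpha>_def)
    have "card (real ` ({..<j} \<union> {n-r+j<..n})) = card ({..<j} \<union> {n-r+j<..n})"
      by (rule card_image) simp
    also have "\<dots> = j + (r - j)"
      using rn jr by (subst card_Un_disjoint) auto
    finally show "r \<le> card (real ` ({..<j} \<union> {n-r+j<..n}))" using jr by simp
    show "degree Pp \<le> r" by fact
    show "degree (smult \<alpha> R) \<le> r" using dR by (simp add: degree_smult_le order.trans[OF degree_smult_le])
  next
    fix z assume "z \<in> real ` ({..<j} \<union> {n-r+j<..n})"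
    then obtain m where z: "z = real m" and m: "m < j \<or> (n - r + j < m \<and> m \<le> n)" by auto
    show "poly Pp z = poly (smult \<alpha> R) z"
    proof (cases "m < j")
      case True
      then show ?thesis using neg[of m] dj by (simp add: z R_def poly_ffpoly ff_zero)
    next
      case False
      then have m2: "n - r + j < m" "m \<le> n" using m by auto
      have "poly Pp z = 0" using big[of m] m2 dj rn jr z by simp
      moreover have "poly (\<Prod>i<r-j. [: real n - real i, -1 :]) z = 0"
        unfolding poly_prod using m2 jr rn z
        by (subst prod_zero_iff) (auto intro!: bexI[of _ "n - m"] simp: of_nat_diff)
      ultimately show ?thesis by (simp add: R_def)
    qed
  qed
  then have PpR: "poly Pp x = \<alpha> * poly R x" for x by simp
  have a0: "\<alpha> \<noteq> 0" using lR cPp br by (simp add: \<alpha>_def)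
  show ?thesis
  proof (intro exI[of _ j] conjI exI[of _ "\<alpha> * fact (r - j)"] jr dj)
    show "\<alpha> * fact (r - j) \<noteq> 0" using a0 by simp
    show "diff_op a r = (\<lambda>p. smult (\<alpha> * fact (r - j)) (K_op n r j p))"
    proof (rule ext, rule poly_eqI)
      fix p t
      have pR: "poly R (real (t+j)) = ff (real (t+j)) j * (\<Prod>i<r-j. real n - real j - real i - real t)"
        unfolding R_def poly_mult poly_ffpoly poly_prod
        by (rule arg_cong[where f="\<lambda>x. ff (real (t+j)) j * x"], rule prod.cong) (auto simp: algebra_simps)
      have "coeff (diff_op a r p) t = coeff p (t + j) * (\<alpha> * poly R (real (t+j)))"
        using cL[of p t] dj by (simp add: L_def PpR nat_add_distrib)
      also have "\<dots> = coeff (smult (\<alpha> * fact (r - j)) (K_op n r j p)) t"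
        using pR by (simp add: coeff_K mult_ac)
      finally show "coeff (diff_op a r p) t = coeff (smult (\<alpha> * fact (r - j)) (K_op n r j p)) t" .
    qed
  qed
qed


theorem mainTheorem13:
  fixes n r :: nat
  assumes "r \<le> n"
  shows "(\<forall>j\<le>r. has_order (K_op n r j) r \<and> has_degree (K_op n r j) (- int j)
                 \<and> deficiency (K_op n r j) n (int r))
       \<and> (\<forall>(L :: real poly \<Rightarrow> real poly) (d :: int).
            has_order L r \<and> deficiency L n (int r) \<and> has_degree L d \<longrightarrow>
            (\<exists>j\<le>r. d = - int j \<and> (\<exists>a :: real. a \<noteq> 0 \<and> L = (\<lambda>p. smult a (K_op n r j p)))))"
proof (rule conjI)
  show "\<forall>j\<le>r. has_order (K_op n r j) r \<and> has_degree (K_op n r j) (- int j)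
                 \<and> deficiency (K_op n r j) n (int r)" using K_part assms by blast
next
  show "\<forall>(L :: real poly \<Rightarrow> real poly) (d :: int).
            has_order L r \<and> deficiency L n (int r) \<and> has_degree L d \<longrightarrow>
            (\<exists>j\<le>r. d = - int j \<and> (\<exists>a :: real. a \<noteq> 0 \<and> L = (\<lambda>p. smult a (K_op n r j p))))"
  proof (intro allI impI)
  fix L :: "real poly \<Rightarrow> real poly" and d :: int
  assume H: "has_order L r \<and> deficiency L n (int r) \<and> has_degree L d"
  then obtain a where ar: "a r \<noteq> 0" and La: "L = diff_op a r" by (auto simp: has_order_def)
  from H obtain c where hc: "\<And>m. (c m \<noteq> 0 \<longrightarrow> int m + d \<ge> 0) \<and> L (monom 1 m) = monom (c m) (nat (int m + d))"
    by (auto simp: has_degree_def)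
  from H have sub: "L ` Pspace (int n) \<subseteq> Pspace (int n - int r)" by (simp add: deficiency_def)
  show "\<exists>j\<le>r. d = - int j \<and> (\<exists>a :: real. a \<noteq> 0 \<and> L = (\<lambda>p. smult a (K_op n r j p)))"
    using converse[where r=r and n=n and a=a and d=d and c=c, OF assms ar] sub hc unfolding La by blast
  qed
qed

end
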